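(* Let $G$ be a finite simple connected graph, let $S\subseteq V(G)$ with $|S|\geq 2$, and let $T_1,\dots,T_k$ ($k\geq 2$) be $S$-Steiner trees in $G$. Then $T_1,\dots,T_k$ are completely independent $S$-Steiner trees if and only if they are pairwise edge-disjoint and, for every vertex $w\in V(G)$, there is at most one index $i$ with $d_{T_i}(w)>1$.
   Context: For $S\subseteq V(G)$ with $|S|\ge 2$, an $S$-Steiner tree of $G$ is a subtree $T$ of $G$ with $S\subseteq V(T)$ all of whose leaves belong to $S$. $S$-Steiner trees $T_1,\dots,T_k$ are called completely independent $S$-Steiner trees (CISSTs) if for all $1\le p<q\le k$: $E(T_p)\cap E(T_q)=\emptyset$, $V(T_p)\cap V(T_q)=S$, and for any two vertices $x_1,x_2\in S$ the $(x_1,x_2)$-paths in $T_p$ and in $T_q$ are internally disjoint. $d_{T}(w)$ denotes the degree of $w$ in $T$ (taken to be $0$ if $w\notin V(T)$). *)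

theory Defs
  imports Main
begin

definition simple_graph :: "'a set \<Rightarrow> 'a set set \<Rightarrow> bool" where
  "simple_graph V E \<longleftrightarrow> finite V \<and>
     (\<forall>e\<in>E. \<exists>u v. e = {u, v} \<and> u \<noteq> v \<and> u \<in> V \<and> v \<in> V)"

definition is_path :: "'a set \<Rightarrow> 'a set set \<Rightarrow> 'a list \<Rightarrow> bool" where
  "is_path V E p \<longleftrightarrow> p \<noteq> [] \<and> distinct p \<and> set p \<subseteq> V \<and>
     (\<forall>i. Suc i < length p \<longrightarrow> {p ! i, p ! Suc i} \<in> E)"

definition connected_graph :: "'a set \<Rightarrow> 'a set set \<Rightarrow> bool" where
  "connected_graph V E \<longleftrightarrow> V \<noteq> {} \<and>
     (\<forall>u\<in>V. \<forall>v\<in>V. \<exists>p. is_path V E p \<and> hd p = u \<and> last p = v)"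

definition has_cycle :: "'a set \<Rightarrow> 'a set set \<Rightarrow> bool" where
  "has_cycle V E \<longleftrightarrow> (\<exists>p. is_path V E p \<and> 3 \<le> length p \<and> {last p, hd p} \<in> E)"

definition is_tree :: "'a set \<Rightarrow> 'a set set \<Rightarrow> bool" where
  "is_tree V E \<longleftrightarrow> simple_graph V E \<and> connected_graph V E \<and> \<not> has_cycle V E"

definition degree :: "'a set set \<Rightarrow> 'a \<Rightarrow> nat" where
  "degree E w = card {e \<in> E. w \<in> e}"

definition steiner_tree :: "'a set \<Rightarrow> 'a set set \<Rightarrow> 'a set \<Rightarrow> 'a set \<Rightarrow> 'a set set \<Rightarrow> bool" where
  "steiner_tree V E S VT ET \<longleftrightarrow> VT \<subseteq> V \<and> ET \<subseteq> E \<and> is_tree VT ET \<and> S \<subseteq> VT \<and>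
     (\<forall>v\<in>VT. degree ET v = 1 \<longrightarrow> v \<in> S)"

text \<open>Completely independent S-Steiner trees T_0,...,T_{k-1}, where T_i = (VT i, ET i).
Internally disjoint (x1,x2)-paths: they share no vertex other than x1, x2.\<close>
definition CISST :: "'a set \<Rightarrow> 'a set set \<Rightarrow> 'a set \<Rightarrow> nat \<Rightarrow> (nat \<Rightarrow> 'a set) \<Rightarrow> (nat \<Rightarrow> 'a set set) \<Rightarrow> bool" where
  "CISST V E S k VT ET \<longleftrightarrow>
     (\<forall>i<k. steiner_tree V E S (VT i) (ET i)) \<and>
     (\<forall>p<k. \<forall>q<k. p < q \<longrightarrow>
        ET p \<inter> ET q = {} \<and> VT p \<inter> VT q = S \<and>
        (\<forall>x1\<in>S. \<forall>x2\<in>S. \<forall>P Q.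
            is_path (VT p) (ET p) P \<and> hd P = x1 \<and> last P = x2 \<and>
            is_path (VT q) (ET q) Q \<and> hd Q = x1 \<and> last Q = x2
            \<longrightarrow> set P \<inter> set Q \<subseteq> {x1, x2}))"

end

theory Submission
  imports Defs
begin


lemma is_path_Nil[simp]: "\<not> is_path V E []"
  by (simp add: is_path_def)

lemma is_path_single[simp]: "is_path V E [x] \<longleftrightarrow> x \<in> V"
  by (simp add: is_path_def)

lemma is_path_Cons2[simp]:
  "is_path V E (x # y # xs) \<longleftrightarrow> x \<in> V \<and> {x,y} \<in> E \<and> x \<notin> set (y # xs) \<and> is_path V E (y # xs)"
proof -
  have "(\<forall>i. Suc i < length (x # y # xs) \<longrightarrow> {(x # y # xs) ! i, (x # y # xs) ! Suc i} \<in> E)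
     \<longleftrightarrow> {x,y} \<in> E \<and> (\<forall>i. Suc i < length (y # xs) \<longrightarrow> {(y # xs) ! i, (y # xs) ! Suc i} \<in> E)"
    (is "?L \<longleftrightarrow> ?R")
  proof
    assume L: ?L
    show ?R
    proof
      show "{x,y} \<in> E" using L[rule_format, of 0] by simp
      show "\<forall>i. Suc i < length (y # xs) \<longrightarrow> {(y # xs) ! i, (y # xs) ! Suc i} \<in> E"
        using L by (metis Suc_less_eq length_Cons nth_Cons_Suc)
    qed
  next
    assume R: ?R
    show ?L
    proof (intro allI impI)
      fix i assume "Suc i < length (x # y # xs)"
      then show "{(x # y # xs) ! i, (x # y # xs) ! Suc i} \<in> E"
        using R by (cases i) auto
    qed
  qed
  then show ?thesis unfolding is_path_def by auto
qed

lemma is_path_append: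
  assumes "xs \<noteq> []" "ys \<noteq> []"
  shows "is_path V E (xs @ ys) \<longleftrightarrow> is_path V E xs \<and> is_path V E ys \<and> {last xs, hd ys} \<in> E
     \<and> set xs \<inter> set ys = {}"
  using assms
proof (induction xs)
  case Nil then show ?case by simp
next
  case (Cons a xs)
  show ?case
  proof (cases xs)
    case Nil
    then show ?thesis using Cons.prems by (cases ys) auto
  next
    case (Cons b xs')
    then show ?thesis using Cons.IH Cons.prems by auto
  qed
qed

lemma is_path_rev[simp]: "is_path V E (rev xs) \<longleftrightarrow> is_path V E xs"
proof (induction xs)
  case Nil then show ?case by simp
next
  case (Cons a xs)
  show ?case
  proof (cases xs)
    case Nil then show ?thesis by simp
  next
    case (Cons b xs')
    have "is_path V E (rev xs @ [a]) \<longleftrightarrow> is_path V E (rev xs) \<and> is_path V E [a] \<and> {last (rev xs), a} \<in> E \<and> set (rev xs) \<inter> {a} = {}"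
      using is_path_append[of "rev xs" "[a]" V E] Cons by simp
    then show ?thesis using Cons.IH Cons by (auto simp: insert_commute last_rev)
  qed
qed


lemma is_path_prefix: "is_path V E (xs @ ys) \<Longrightarrow> xs \<noteq> [] \<Longrightarrow> is_path V E xs"
  by (cases "ys = []") (auto simp: is_path_append)

lemma is_path_suffix: "is_path V E (xs @ ys) \<Longrightarrow> ys \<noteq> [] \<Longrightarrow> is_path V E ys"
  by (cases "xs = []") (auto simp: is_path_append)

lemma is_path_distinct: "is_path V E p \<Longrightarrow> distinct p"
  by (simp add: is_path_def)

lemma is_path_set: "is_path V E p \<Longrightarrow> set p \<subseteq> V"
  by (simp add: is_path_def)

lemma cyc:
  assumes A: "is_path V E (u # A)" and B: "is_path V E (u # B)"
    and ne: "A \<noteq> []" "B \<noteq> []" and hd: "hd A \<noteq> hd B" and int: "set A \<inter> set B \<noteq> {}"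
  shows "has_cycle V E"
proof -
  from int have "\<exists>x\<in>set B. x \<in> set A" by auto
  then obtain B1 v B2 where Bs: "B = B1 @ v # B2" and vA: "v \<in> set A" and B1: "\<forall>y\<in>set B1. y \<notin> set A"
    using split_list_first_prop[of B "\<lambda>x. x \<in> set A"] by blast
  from vA obtain A1 A2 where As: "A = A1 @ v # A2" by (meson split_list)
  define C where "C = (u # A1 @ [v]) @ rev B1"
  have pA: "is_path V E (u # A1 @ [v])"
    using A As is_path_prefix[of V E "u # A1 @ [v]" A2] by simp
  have pB: "is_path V E (u # B1 @ [v])"
    using B Bs is_path_prefix[of V E "u # B1 @ [v]" B2] by simp
  have uB: "u \<notin> set B" using B is_path_distinct by fastforce
  have pC: "is_path V E C"
  proof (cases "B1 = []")
    case True then show ?thesis using pA C_def by simp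
  next
    case False
    have pB1: "is_path V E (B1 @ [v])" using pB is_path_suffix[of V E "[u]" "B1 @ [v]"] by simp
    then have e: "{last B1, v} \<in> E" and pB1': "is_path V E B1"
      using False is_path_append[of B1 "[v]" V E] by auto
    show ?thesis unfolding C_def
      using is_path_append[of "u # A1 @ [v]" "rev B1" V E] False pA pB1' e B1 As uB Bs
      by (auto simp: hd_rev insert_commute)
  qed
  have lastC: "last C = hd B"
    using Bs by (cases B1) (auto simp: C_def last_rev)
  have eu: "{u, hd B} \<in> E" using B ne by (cases B) auto
  have lenC: "3 \<le> length C"
  proof -
    have "A1 \<noteq> [] \<or> B1 \<noteq> []" using hd As Bs by auto
    then show ?thesis by (auto simp: C_def Suc_le_eq)
  qed
  show ?thesis unfolding has_cycle_def
    using pC lastC eu lenC by (auto simp: C_def insert_commute)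
qed

lemma simple_finite_E: "simple_graph V E \<Longrightarrow> finite E"
proof -
  assume s: "simple_graph V E"
  then have "E \<subseteq> Pow V" unfolding simple_graph_def by auto
  moreover have "finite V" using s simple_graph_def by auto
  ultimately show ?thesis by (meson finite_Pow_iff finite_subset)
qed

lemma simple_edge: "simple_graph V E \<Longrightarrow> {x, y} \<in> E \<Longrightarrow> x \<noteq> y \<and> x \<in> V \<and> y \<in> V"
  unfolding simple_graph_def by (metis doubleton_eq_iff insertI1)

lemma deg_two:
  assumes "simple_graph V E" "{w, a} \<in> E" "{w, b} \<in> E" "a \<noteq> b"
  shows "degree E w > 1"
proof -
  have f: "finite {e \<in> E. w \<in> e}" using simple_finite_E[OF assms(1)] by simp
  have "{w,a} \<noteq> {w,b}" using assms(4) by (metis doubleton_eq_iff)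
  then have "\<not> card {e \<in> E. w \<in> e} \<le> Suc 0"
    using card_le_Suc0_iff_eq[OF f] assms(2,3) by auto
  then show ?thesis unfolding degree_def by simp
qed

lemma deg_pos:
  assumes "simple_graph V E" "{w, a} \<in> E"
  shows "degree E w \<ge> 1"
proof -
  have f: "finite {e \<in> E. w \<in> e}" using simple_finite_E[OF assms(1)] by simp
  have "{e \<in> E. w \<in> e} \<noteq> {}" using assms(2) by auto
  then show ?thesis unfolding degree_def using f
    by (simp add: Suc_le_eq card_gt_0_iff)
qed

lemma deg_gt1_nbrs:
  assumes s: "simple_graph V E" and d: "degree E w > 1"
  shows "\<exists>a b. a \<noteq> b \<and> {w,a} \<in> E \<and> {w,b} \<in> E"
proof -
  have f: "finite {e \<in> E. w \<in> e}" using simple_finite_E[OF s] by simp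
  from d have "\<not> card {e \<in> E. w \<in> e} \<le> Suc 0" unfolding degree_def by simp
  then obtain e1 e2 where e: "e1 \<in> E" "e2 \<in> E" "w \<in> e1" "w \<in> e2" "e1 \<noteq> e2"
    using card_le_Suc0_iff_eq[OF f] by auto
  from s e obtain a where a: "e1 = {w, a}"
    unfolding simple_graph_def by (metis insert_commute insertE singletonD)
  from s e obtain b where b: "e2 = {w, b}"
    unfolding simple_graph_def by (metis insert_commute insertE singletonD)
  show ?thesis using a b e by auto
qed

lemma deg_gt1_in: "simple_graph V E \<Longrightarrow> degree E w > 1 \<Longrightarrow> w \<in> V"
  using deg_gt1_nbrs simple_edge by metis


lemma path_len_le: "is_path V E p \<Longrightarrow> finite V \<Longrightarrow> length p \<le> card V"
  by (metis card_mono distinct_card is_path_distinct is_path_set)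

lemma extend_leaf:
  assumes st: "steiner_tree V E S VT ET" and e: "{w,u} \<in> ET"
  shows "\<exists>R. is_path VT ET (w # u # R) \<and> last (u # R) \<in> S"
proof -
  have tr: "is_tree VT ET" using st unfolding steiner_tree_def by auto
  have sg: "simple_graph VT ET" and acyc: "\<not> has_cycle VT ET" using tr unfolding is_tree_def by auto
  have fin: "finite VT" using sg unfolding simple_graph_def by auto
  have leaf: "\<forall>v\<in>VT. degree ET v = 1 \<longrightarrow> v \<in> S" using st unfolding steiner_tree_def by auto
  define Pn where "Pn n = (\<exists>R. is_path VT ET (w#u#R) \<and> length R = n)" for n
  have P0: "Pn 0" unfolding Pn_def using simple_edge[OF sg e] e by auto
  have bnd: "\<forall>y. Pn y \<longrightarrow> y \<le> card VT"
    unfolding Pn_def using path_len_le[OF _ fin] by fastforce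
  obtain n where n: "Pn n" and nmax: "\<forall>y. Pn y \<longrightarrow> y \<le> n"
    using Nat.ex_has_greatest_nat[OF P0 bnd] by blast
  obtain R where pR: "is_path VT ET (w#u#R)" and lR: "length R = n" using n Pn_def by auto
  define v where "v = last (u # R)"
  show ?thesis
  proof (rule ccontr)
    assume nS: "\<not> ?thesis"
    then have vS: "v \<notin> S" using pR v_def by auto
    define Pth where "Pth = w # u # R"
    have lastP: "last Pth = v" by (simp add: Pth_def v_def)
    define Q where "Q = butlast Pth"
    have PQ: "Pth = Q @ [v]" using lastP Pth_def Q_def append_butlast_last_id
      by (metis list.distinct(1))
    have Qne: "Q \<noteq> []" by (simp add: Q_def Pth_def)
    have pQv: "is_path VT ET (Q @ [v])" using pR PQ Pth_def by metis
    have eQ: "{last Q, v} \<in> ET" and pQ: "is_path VT ET Q" and vQ: "v \<notin> set Q"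
      using is_path_append[of Q "[v]" VT ET] pQv Qne by auto
    have vV: "v \<in> VT" using simple_edge[OF sg eQ] by simp
    have "degree ET v \<ge> 1" using deg_pos[OF sg, of v "last Q"] eQ by (simp add: insert_commute)
    moreover have "degree ET v \<noteq> 1" using leaf vV vS by auto
    ultimately have "degree ET v > 1" by simp
    then obtain a b where ab: "a \<noteq> b" "{v,a} \<in> ET" "{v,b} \<in> ET" using deg_gt1_nbrs[OF sg] by blast
    then obtain z where z: "{v,z} \<in> ET" "z \<noteq> last Q" by metis
    have zv: "z \<noteq> v" using simple_edge[OF sg z(1)] by auto
    show False
    proof (cases "z \<in> set Pth")
      case False
      have "is_path VT ET (Pth @ [z])"
        using is_path_append[of Pth "[z]" VT ET] pR Pth_def lastP z simple_edge[OF sg z(1)] False by auto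
      then have "Pn (Suc n)" unfolding Pn_def Pth_def using lR by (intro exI[of _ "R @ [z]"]) auto
      then show False using nmax by fastforce
    next
      case True
      then have "z \<in> set Q" using PQ zv by auto
      then obtain X Y where QXY: "Q = X @ z # Y" by (meson split_list)
      have Yne: "Y \<noteq> []" using QXY z(2) by auto
      define C where "C = z # Y @ [v]"
      have "Pth = X @ C" using PQ QXY C_def by simp
      then have pC: "is_path VT ET C" using pR Pth_def is_path_suffix[of VT ET X C] C_def by simp
      have "3 \<le> length C" using Yne C_def by (cases Y) auto
      moreover have "{last C, hd C} \<in> ET" using C_def z(1) by simp
      ultimately have "has_cycle VT ET" using pC has_cycle_def by blast
      then show False using acyc by simp
    qed
  qed
qed


definition sepD :: "'a set \<Rightarrow> 'a set set \<Rightarrow> 'a \<Rightarrow> 'a \<Rightarrow> 'a \<Rightarrow> bool" where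
  "sepD VT ET w x y \<longleftrightarrow> (\<exists>u1 u2 R1 R2. u1 \<noteq> u2 \<and> is_path VT ET (w#u1#R1) \<and> last (u1#R1) = x
      \<and> is_path VT ET (w#u2#R2) \<and> last (u2#R2) = y)"

lemma sepD_sym: "sepD VT ET w x y \<Longrightarrow> sepD VT ET w y x"
  unfolding sepD_def by metis

lemma sepD_ne: "sepD VT ET w x y \<Longrightarrow> x \<noteq> w \<and> y \<noteq> w"
  unfolding sepD_def by (metis is_path_Cons2 last_in_set list.distinct(1))

lemma sepD_split:
  assumes c: "connected_graph VT ET" and w: "w \<in> VT" and s: "sepD VT ET w x y"
    and z: "z \<in> VT" "z \<noteq> w"
  shows "sepD VT ET w z x \<or> sepD VT ET w z y"
proof -
  obtain p where p: "is_path VT ET p" "hd p = w" "last p = z"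
    using c w z unfolding connected_graph_def by blast
  obtain u3 R3 where p3: "p = w # u3 # R3"
    using p z by (cases p; cases "tl p") auto
  obtain u1 u2 R1 R2 where u: "u1 \<noteq> u2" "is_path VT ET (w#u1#R1)" "last (u1#R1) = x"
      "is_path VT ET (w#u2#R2)" "last (u2#R2) = y"
    using s sepD_def by metis
  have l3: "last (u3 # R3) = z" using p p3 by simp
  show ?thesis
  proof (cases "u3 = u1")
    case True
    then have "sepD VT ET w z y" unfolding sepD_def using u p p3 l3 by metis
    then show ?thesis by simp
  next
    case False
    then have "sepD VT ET w z x" unfolding sepD_def using u p p3 l3 by metis
    then show ?thesis by simp
  qed
qed

lemma sepD_path:
  assumes ac: "\<not> has_cycle VT ET" and s: "sepD VT ET w x y"
  shows "\<exists>P. is_path VT ET P \<and> hd P = x \<and> last P = y \<and> w \<in> set P \<and> w \<noteq> x \<and> w \<noteq> y"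
proof -
  obtain u1 u2 R1 R2 where u: "u1 \<noteq> u2" "is_path VT ET (w#u1#R1)" "last (u1#R1) = x"
      "is_path VT ET (w#u2#R2)" "last (u2#R2) = y"
    using s sepD_def by metis
  have disj: "set (u1#R1) \<inter> set (u2#R2) = {}"
    using cyc[of VT ET w "u1#R1" "u2#R2"] u ac by auto
  have p1: "is_path VT ET (u1#R1)" using u(2) by simp
  have wn: "w \<notin> set (u1#R1)" using u(2) by simp
  define P where "P = rev (u1#R1) @ (w#u2#R2)"
  have A: "is_path VT ET (rev (u1#R1))" using p1 is_path_rev by blast
  have L: "last (rev(u1#R1)) = u1" by simp
  have Ed: "{u1, w} \<in> ET" using u(2) by (simp add: insert_commute)
  have D: "set (rev (u1#R1)) \<inter> set (w#u2#R2) = {}" using disj wn by auto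
  have iff: "is_path VT ET (rev (u1#R1) @ (w#u2#R2)) \<longleftrightarrow> is_path VT ET (rev (u1#R1)) \<and> is_path VT ET (w#u2#R2)
     \<and> {last (rev (u1#R1)), hd (w#u2#R2)} \<in> ET \<and> set (rev (u1#R1)) \<inter> set (w#u2#R2) = {}"
    by (rule is_path_append) auto
  have "is_path VT ET P" unfolding P_def
    by (simp only: iff L list.sel(1)) (intro conjI A u(4) Ed D)
  moreover have "hd P = x" using u(3) by (cases R1 rule: rev_cases) (auto simp: P_def)
  moreover have "last P = y" using u(5) by (simp add: P_def)
  moreover have "w \<in> set P" by (simp add: P_def)
  ultimately show ?thesis using sepD_ne[OF s] by blast
qed

lemma sepD_exists:
  assumes st: "steiner_tree V E S VT ET" and d: "degree ET w > 1"
  shows "\<exists>a1 a2. a1 \<in> S \<and> a2 \<in> S \<and> sepD VT ET w a1 a2"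
proof -
  have sg: "simple_graph VT ET" using st unfolding steiner_tree_def is_tree_def by auto
  obtain a b where ab: "a \<noteq> b" "{w,a} \<in> ET" "{w,b} \<in> ET" using deg_gt1_nbrs[OF sg d] by blast
  obtain R1 where r1: "is_path VT ET (w # a # R1)" "last (a # R1) \<in> S" using extend_leaf[OF st ab(2)] by blast
  obtain R2 where r2: "is_path VT ET (w # b # R2)" "last (b # R2) \<in> S" using extend_leaf[OF st ab(3)] by blast
  show ?thesis unfolding sepD_def using ab r1 r2 by blast
qed

lemma two_trees_contra:
  assumes stp: "steiner_tree V E S VP EP" and stq: "steiner_tree V E S VQ EQ"
    and cond: "\<forall>x1\<in>S. \<forall>x2\<in>S. \<forall>P Q.
            is_path VP EP P \<and> hd P = x1 \<and> last P = x2 \<and>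
            is_path VQ EQ Q \<and> hd Q = x1 \<and> last Q = x2
            \<longrightarrow> set P \<inter> set Q \<subseteq> {x1, x2}"
    and dp: "degree EP w > 1" and dq: "degree EQ w > 1"
  shows False
proof -
  have tp: "is_tree VP EP" "S \<subseteq> VP" using stp unfolding steiner_tree_def by auto
  have tq: "is_tree VQ EQ" "S \<subseteq> VQ" using stq unfolding steiner_tree_def by auto
  have cp: "connected_graph VP EP" "\<not> has_cycle VP EP" "simple_graph VP EP" using tp unfolding is_tree_def by auto
  have cq: "connected_graph VQ EQ" "\<not> has_cycle VQ EQ" "simple_graph VQ EQ" using tq unfolding is_tree_def by auto
  have wp: "w \<in> VP" using deg_gt1_in[OF cp(3) dp] .
  have wq: "w \<in> VQ" using deg_gt1_in[OF cq(3) dq] .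
  obtain a1 a2 where a: "a1 \<in> S" "a2 \<in> S" "sepD VP EP w a1 a2" using sepD_exists[OF stp dp] by blast
  obtain b1 b2 where b: "b1 \<in> S" "b2 \<in> S" "sepD VQ EQ w b1 b2" using sepD_exists[OF stq dq] by blast
  have ne: "a1 \<noteq> w" "a2 \<noteq> w" using sepD_ne[OF a(3)] by auto
  have fin: "\<exists>x y. x \<in> S \<and> y \<in> S \<and> sepD VP EP w x y \<and> sepD VQ EQ w x y"
  proof -
    obtain c where c: "c \<in> S" "sepD VQ EQ w a1 c"
      using sepD_split[OF cq(1) wq b(3), of a1] a tq ne b by blast
    have cne: "c \<noteq> w" using sepD_ne[OF c(2)] by simp
    show ?thesis
    proof (cases "sepD VQ EQ w a2 a1")
      case True then show ?thesis using a sepD_sym by metis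
    next
      case False
      then have q2: "sepD VQ EQ w a2 c"
        using sepD_split[OF cq(1) wq sepD_sym[OF c(2)], of a2] a tq ne by blast
      have "sepD VP EP w c a1 \<or> sepD VP EP w c a2"
        using sepD_split[OF cp(1) wp a(3), of c] c tp cne by blast
      then show ?thesis using q2 c a sepD_sym by metis
    qed
  qed
  then obtain x y where xy: "x \<in> S" "y \<in> S" "sepD VP EP w x y" "sepD VQ EQ w x y" by blast
  obtain P where P: "is_path VP EP P" "hd P = x" "last P = y" "w \<in> set P" "w \<noteq> x" "w \<noteq> y"
    using sepD_path[OF cp(2) xy(3)] by blast
  obtain Q where Q: "is_path VQ EQ Q" "hd Q = x" "last Q = y" "w \<in> set Q"
    using sepD_path[OF cq(2) xy(4)] by blast
  have "set P \<inter> set Q \<subseteq> {x, y}" using cond xy P Q by blast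
  then show False using P Q by auto
qed


lemma internal_deg:
  assumes sg: "simple_graph VT ET" and P: "is_path VT ET P" and w: "w \<in> set P" "w \<noteq> hd P" "w \<noteq> last P"
  shows "degree ET w > 1"
proof -
  obtain A B where AB: "P = A @ w # B" using w(1) by (meson split_list)
  have Ane: "A \<noteq> []" using AB w(2) by auto
  have Bne: "B \<noteq> []" using AB w(3) by auto
  have "is_path VT ET (A @ (w # B))" using P AB by simp
  then have e1: "{last A, w} \<in> ET" and pB: "is_path VT ET (w # B)" and dj: "set A \<inter> set (w # B) = {}"
    using is_path_append[of A "w # B" VT ET] Ane by auto
  have e2: "{w, hd B} \<in> ET" using pB Bne by (cases B) auto
  have "last A \<noteq> hd B" using dj Ane Bne by (metis IntI empty_iff last_in_set list.set_sel(1) list.set_intros(2))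
  then show ?thesis using deg_two[OF sg, of w "last A" "hd B"] e1 e2 by (simp add: insert_commute)
qed

lemma nonS_deg:
  assumes st: "steiner_tree V E S VT ET" and Sne: "S \<noteq> {}" and v: "v \<in> VT" "v \<notin> S"
  shows "degree ET v > 1"
proof -
  have sg: "simple_graph VT ET" and c: "connected_graph VT ET" and SV: "S \<subseteq> VT"
    and leaf: "\<forall>v\<in>VT. degree ET v = 1 \<longrightarrow> v \<in> S"
    using st unfolding steiner_tree_def is_tree_def by auto
  obtain s where s: "s \<in> S" using Sne by auto
  obtain p where p: "is_path VT ET p" "hd p = v" "last p = s"
    using c v SV s unfolding connected_graph_def by blast
  obtain y R where pR: "p = v # y # R" using p s v by (cases p; cases "tl p") auto
  have "{v, y} \<in> ET" using p pR by simp
  then have "degree ET v \<ge> 1" using deg_pos[OF sg] by blast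
  moreover have "degree ET v \<noteq> 1" using leaf v by auto
  ultimately show ?thesis by simp
qed

lemma card2:
  fixes p q k :: nat
  assumes "p < k" "q < k" "p \<noteq> q" "degree (ET p) w > 1" "degree (ET q) w > 1"
  shows "\<not> card {i. i < k \<and> degree (ET i) w > 1} \<le> 1"
proof -
  have f: "finite {i. i < k \<and> degree (ET i) w > 1}" by (rule finite_subset[of _ "{..<k}"]) auto
  show ?thesis using card_le_Suc0_iff_eq[OF f] assms by auto
qed



theorem theorem2p1:
  fixes V :: "'a set" and E :: "'a set set" and S :: "'a set" and k :: nat
    and VT :: "nat \<Rightarrow> 'a set" and ET :: "nat \<Rightarrow> 'a set set"
  assumes "simple_graph V E" and "connected_graph V E"
    and "S \<subseteq> V" and "card S \<ge> 2"
    and "k \<ge> 2"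
    and "\<forall>i<k. steiner_tree V E S (VT i) (ET i)"
  shows "CISST V E S k VT ET \<longleftrightarrow>
    ((\<forall>p<k. \<forall>q<k. p \<noteq> q \<longrightarrow> ET p \<inter> ET q = {}) \<and>
     (\<forall>w\<in>V. card {i. i < k \<and> degree (ET i) w > 1} \<le> 1))"
proof
  assume C: "CISST V E S k VT ET"
  have CC: "\<forall>p<k. \<forall>q<k. p < q \<longrightarrow>
        ET p \<inter> ET q = {} \<and> VT p \<inter> VT q = S \<and>
        (\<forall>x1\<in>S. \<forall>x2\<in>S. \<forall>P Q.
            is_path (VT p) (ET p) P \<and> hd P = x1 \<and> last P = x2 \<and>
            is_path (VT q) (ET q) Q \<and> hd Q = x1 \<and> last Q = x2
            \<longrightarrow> set P \<inter> set Q \<subseteq> {x1, x2})"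
    using C unfolding CISST_def by (rule conjunct2)
  have C3: "(\<forall>x1\<in>S. \<forall>x2\<in>S. \<forall>P Q.
            is_path (VT p) (ET p) P \<and> hd P = x1 \<and> last P = x2 \<and>
            is_path (VT q) (ET q) Q \<and> hd Q = x1 \<and> last Q = x2
            \<longrightarrow> set P \<inter> set Q \<subseteq> {x1, x2})" if pqk: "p<k" "q<k" "p<q" for p q
    using conjunct2[OF conjunct2[OF mp[OF mp[OF spec[OF mp[OF spec[OF CC, of p] pqk(1)], of q] pqk(2)] pqk(3)]]] .
  have C2: "ET p \<inter> ET q = {}" if pqk: "p<k" "q<k" "p<q" for p q
    using conjunct1[OF mp[OF mp[OF spec[OF mp[OF spec[OF CC, of p] pqk(1)], of q] pqk(2)] pqk(3)]] .
  show "(\<forall>p<k. \<forall>q<k. p \<noteq> q \<longrightarrow> ET p \<inter> ET q = {}) \<and>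
     (\<forall>w\<in>V. card {i. i < k \<and> degree (ET i) w > 1} \<le> 1)"
  proof (intro conjI ballI allI impI)
    fix p q assume pq: "p < k" "q < k" "p \<noteq> q"
    then show "ET p \<inter> ET q = {}"
    proof (cases "p < q")
      case True then show ?thesis using C2 pq by simp
    next
      case False then have "q < p" using pq by simp
      then show ?thesis using C2[of q p] pq by (simp add: Int_commute)
    qed
  next
    fix w assume "w \<in> V"
    show "card {i. i < k \<and> degree (ET i) w > 1} \<le> 1"
    proof (rule ccontr)
      assume nc: "\<not> ?thesis"
      have f: "finite {i. i < k \<and> degree (ET i) w > 1}" by (rule finite_subset[of _ "{..<k}"]) auto
      obtain p q where pq: "p < k" "q < k" "p \<noteq> q" "degree (ET p) w > 1" "degree (ET q) w > 1"
        using nc card_le_Suc0_iff_eq[OF f] by auto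
      have "\<exists>p q. p < k \<and> q < k \<and> p < q \<and> degree (ET p) w > 1 \<and> degree (ET q) w > 1"
      proof (cases "p < q")
        case True then show ?thesis using pq by blast
      next
        case False then have "q < p" using pq by simp
        then show ?thesis using pq by blast
      qed
      then obtain p' q' where pq': "p' < k" "q' < k" "p' < q'" "degree (ET p') w > 1" "degree (ET q') w > 1"
        by blast
      have c: "\<forall>x1\<in>S. \<forall>x2\<in>S. \<forall>P Q.
            is_path (VT p') (ET p') P \<and> hd P = x1 \<and> last P = x2 \<and>
            is_path (VT q') (ET q') Q \<and> hd Q = x1 \<and> last Q = x2
            \<longrightarrow> set P \<inter> set Q \<subseteq> {x1, x2}"
        using C3[OF pq'(1-3)] .
      have s1: "steiner_tree V E S (VT p') (ET p')" using assms(6) pq'(1) by blast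
      have s2: "steiner_tree V E S (VT q') (ET q')" using assms(6) pq'(2) by blast
      show False
        using two_trees_contra[OF s1 s2 c pq'(4) pq'(5)] .
    qed
  qed
next
  assume H: "(\<forall>p<k. \<forall>q<k. p \<noteq> q \<longrightarrow> ET p \<inter> ET q = {}) \<and>
     (\<forall>w\<in>V. card {i. i < k \<and> degree (ET i) w > 1} \<le> 1)"
  have Sne: "S \<noteq> {}" using assms(4) by auto
  show "CISST V E S k VT ET" unfolding CISST_def
  proof (intro conjI allI impI ballI)
    fix i assume "i < k" then show "steiner_tree V E S (VT i) (ET i)" using assms(6) by blast
  next
    fix p q assume pq: "p < k" "q < k" "p < q"
    then show "ET p \<inter> ET q = {}" using H by auto
  next
    fix p q assume pq: "p < k" "q < k" "p < q"
    have stp: "steiner_tree V E S (VT p) (ET p)" and stq: "steiner_tree V E S (VT q) (ET q)"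
      using assms(6) pq by auto
    show "VT p \<inter> VT q = S"
    proof
      show "S \<subseteq> VT p \<inter> VT q" using stp stq unfolding steiner_tree_def by auto
    next
      show "VT p \<inter> VT q \<subseteq> S"
      proof
        fix v assume v: "v \<in> VT p \<inter> VT q"
        show "v \<in> S"
        proof (rule ccontr)
          assume "v \<notin> S"
          then have "degree (ET p) v > 1" "degree (ET q) v > 1"
            using nonS_deg[OF stp Sne] nonS_deg[OF stq Sne] v by auto
          moreover have "v \<in> V" using stp v unfolding steiner_tree_def by auto
          ultimately show False using card2[of p k q ET v] pq H by auto
        qed
      qed
    qed
  next
    fix p q x1 x2 P Q
    assume pq: "p < k" "q < k" "p < q" and x: "x1 \<in> S" "x2 \<in> S"
      and PQ: "is_path (VT p) (ET p) P \<and> hd P = x1 \<and> last P = x2 \<and>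
            is_path (VT q) (ET q) Q \<and> hd Q = x1 \<and> last Q = x2"
    have stp: "steiner_tree V E S (VT p) (ET p)" and stq: "steiner_tree V E S (VT q) (ET q)"
      using assms(6) pq by auto
    have sgp: "simple_graph (VT p) (ET p)" using stp unfolding steiner_tree_def is_tree_def by auto
    have sgq: "simple_graph (VT q) (ET q)" using stq unfolding steiner_tree_def is_tree_def by auto
    show "set P \<inter> set Q \<subseteq> {x1, x2}"
    proof
      fix w assume w: "w \<in> set P \<inter> set Q"
      show "w \<in> {x1, x2}"
      proof (rule ccontr)
        assume nw: "w \<notin> {x1, x2}"
        have dp: "degree (ET p) w > 1" using internal_deg[OF sgp, of P w] PQ w nw by auto
        have dq: "degree (ET q) w > 1" using internal_deg[OF sgq, of Q w] PQ w nw by auto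
        have "w \<in> V" using deg_gt1_in[OF sgp dp] stp unfolding steiner_tree_def by auto
        then show False using card2[of p k q ET w] pq H dp dq by auto
      qed
    qed
  qed
qed

end
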